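(* Let $X$ be a real Hilbert space, let $\beta>\delta>0$, and let $T_1,T_2\colon X\to X$. Suppose $T_1$ is $\tfrac1\beta$-cocoercive and $T_2$ is $\tfrac1\delta$-cocoercive. Then $T_1-T_2$ is $\beta$-Lipschitz continuous.
   Context: For $\beta>0$, an operator $T\colon X\to X$ is $\tfrac1\beta$-cocoercive if there exists a nonexpansive $N\colon X\to X$ with $T=\tfrac\beta2(\mathrm{Id}+N)$ (equivalently, $\langle x-y,Tx-Ty\rangle\ge\tfrac1\beta\|Tx-Ty\|^2$ for all $x,y$). Nonexpansive means $1$-Lipschitz. *)

theory Defs
  imports "HOL-Analysis.Analysis"
begin

definition nonexpansive :: "('a::real_normed_vector \<Rightarrow> 'a) \<Rightarrow> bool" where
  "nonexpansive N \<longleftrightarrow> 1-lipschitz_on UNIV N"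

text \<open>T is (1/beta)-cocoercive iff T = (beta/2)(Id + N) for some nonexpansive N.
  The parameter passed is beta (the reciprocal of the cocoercivity constant).\<close>
definition cocoercive_inv :: "real \<Rightarrow> ('a::real_normed_vector \<Rightarrow> 'a) \<Rightarrow> bool" where
  "cocoercive_inv \<beta> T \<longleftrightarrow> (\<exists>N. nonexpansive N \<and> (\<forall>x. T x = (\<beta> / 2) *\<^sub>R (x + N x)))"

end

theory Submission
  imports Defs
begin

theorem mainTheorem3:
  fixes T1 T2 :: "'a::{real_inner, complete_space} \<Rightarrow> 'a"
    and \<beta> \<delta> :: real
  assumes "\<beta> > \<delta>" and "\<delta> > 0"
    and "cocoercive_inv \<beta> T1"
    and "cocoercive_inv \<delta> T2"
  shows "\<beta>-lipschitz_on UNIV (\<lambda>x. T1 x - T2 x)"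
proof -
  obtain N1 where n1: "nonexpansive N1" and t1: "\<And>x. T1 x = (\<beta> / 2) *\<^sub>R (x + N1 x)"
    using assms(3) unfolding cocoercive_inv_def by blast
  obtain N2 where n2: "nonexpansive N2" and t2: "\<And>x. T2 x = (\<delta> / 2) *\<^sub>R (x + N2 x)"
    using assms(4) unfolding cocoercive_inv_def by blast
  have l1: "\<And>x y. norm (N1 x - N1 y) \<le> norm (x - y)"
    using n1 unfolding nonexpansive_def lipschitz_on_def dist_norm by auto
  have l2: "\<And>x y. norm (N2 x - N2 y) \<le> norm (x - y)"
    using n2 unfolding nonexpansive_def lipschitz_on_def dist_norm by auto
  show ?thesis
  proof (rule lipschitz_onI)
    fix x y :: 'a
    have eq: "(T1 x - T2 x) - (T1 y - T2 y) =
      ((\<beta> - \<delta>)/2) *\<^sub>R (x - y) + (\<beta>/2) *\<^sub>R (N1 x - N1 y) - (\<delta>/2) *\<^sub>R (N2 x - N2 y)"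
    proof -
      have a: "((\<beta> - \<delta>)/2) *\<^sub>R (x - y) = (\<beta>/2) *\<^sub>R (x - y) - (\<delta>/2) *\<^sub>R (x - y)"
        by (simp add: diff_divide_distrib scaleR_diff_left)
      show ?thesis unfolding a t1 t2 by (simp add: algebra_simps)
    qed
    have "norm ((T1 x - T2 x) - (T1 y - T2 y)) \<le>
      norm (((\<beta> - \<delta>)/2) *\<^sub>R (x - y)) + norm ((\<beta>/2) *\<^sub>R (N1 x - N1 y)) + norm ((\<delta>/2) *\<^sub>R (N2 x - N2 y))"
      unfolding eq by (meson norm_triangle_ineq norm_triangle_ineq4 order_trans add_mono order_refl)
    also have "\<dots> = ((\<beta> - \<delta>)/2) * norm (x - y) + (\<beta>/2) * norm (N1 x - N1 y) + (\<delta>/2) * norm (N2 x - N2 y)"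
      using assms(1,2) by simp
    also have "\<dots> \<le> ((\<beta> - \<delta>)/2) * norm (x - y) + (\<beta>/2) * norm (x - y) + (\<delta>/2) * norm (x - y)"
      using assms(1,2) l1[of x y] l2[of x y]
      by (intro add_mono mult_left_mono) auto
    also have "\<dots> = \<beta> * norm (x - y)" by (simp add: field_simps)
    finally show "dist (T1 x - T2 x) (T1 y - T2 y) \<le> \<beta> * dist x y" by (simp add: dist_norm)
  next
    show "0 \<le> \<beta>" using assms by simp
  qed
qed

end
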